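(* Let $v:\mathbb T\times\mathbb R\to\mathbb R$, $v=\frac12(v_1-v_{-1})$, where $v_{\pm1}$ satisfy: (H2) $\int_0^1v^2(\theta,r)\,d\theta\ne0$ for every $r\in\mathbb R$; (H3) $v_{\pm1}(\cdot,r)$ are trigonometric polynomials of degree at most $d$ for every $r$; (H4) for every rational $p/q$ with $\gcd(p,q)=1$, $1\le|q|\le2d$, and every $\theta$, $\sum_{k=1}^q[v_{-1}(\theta+k/q,p/q)-v_1(\theta+k/q,p/q)]^2\ne0$. Let $p/q$ be an Imaginary Rational, i.e. $\gcd(p,q)=1$ and $d<|q|<\varepsilon^{-b}$. Then for every $\theta$, $\sigma^2(\theta,p/q)\ne0$, where $\sigma^2(\theta,r)=\frac1q\sum_{k=0}^{q-1}v^2(\theta+kr,r)$.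
   Context: $\varepsilon>0$ and $b>0$ are parameters; $d$ is a positive integer; $\mathbb T=\mathbb R/\mathbb Z$. *)

theory Defs
  imports "HOL-Analysis.Analysis"
begin

definition trig_poly_deg :: "nat \<Rightarrow> (real \<Rightarrow> real) \<Rightarrow> bool" where
  "trig_poly_deg d f \<longleftrightarrow>
     (\<exists>a b :: nat \<Rightarrow> real. \<forall>\<theta>. f \<theta> =
        (\<Sum>k\<le>d. a k * cos (2 * pi * real k * \<theta>) + b k * sin (2 * pi * real k * \<theta>)))"

definition vfun :: "(real \<Rightarrow> real \<Rightarrow> real) \<Rightarrow> (real \<Rightarrow> real \<Rightarrow> real) \<Rightarrow> real \<Rightarrow> real \<Rightarrow> real" where
  "vfun v1 vm1 \<theta> r = (v1 \<theta> r - vm1 \<theta> r) / 2"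

definition sigma2 :: "(real \<Rightarrow> real \<Rightarrow> real) \<Rightarrow> real \<Rightarrow> int \<Rightarrow> nat \<Rightarrow> real" where
  "sigma2 v \<theta> p q = (1 / real q) *
     (\<Sum>k<q. (v (\<theta> + real k * (real_of_int p / real q)) (real_of_int p / real q))\<^sup>2)"

end

theory Submission
  imports Defs
begin


definition tt :: "int \<Rightarrow> real \<Rightarrow> real \<Rightarrow> real" where
  "tt n a x = cos (2 * pi * of_int n * x + a)"

lemma cos_shift_int: "cos (y + 2 * pi * of_int z) = cos y"
  by (simp add: cos_add)

lemma tt_periodic: "tt n a (x + of_int m) = tt n a x"
proof -
  have "2 * pi * of_int n * (x + of_int m) + a = (2 * pi * of_int n * x + a) + 2 * pi * of_int (n*m)"
    by (simp add: algebra_simps)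
  then show ?thesis unfolding tt_def by (simp only: cos_shift_int)
qed

lemma tt_sum:
  assumes q: "q > 0" and nq: "\<bar>n\<bar> < int q"
  shows "(\<Sum>j<q. tt n a (\<theta> + real j / real q)) = (if n = 0 then real q * cos a else 0)"
proof (cases "n = 0")
  case True then show ?thesis by (simp add: tt_def)
next
  case False
  define w where "w = cis (2 * pi * of_int n / real q)"
  define z where "z = cis (2 * pi * of_int n * \<theta> + a)"
  have e: "tt n a (\<theta> + real j / real q) = Re (z * w ^ j) " for j
  proof -
    have "z * w ^ j = cis (2 * pi * of_int n * \<theta> + a + real j * (2 * pi * of_int n / real q))"
      unfolding z_def w_def by (simp only: Complex.DeMoivre cis_mult)
    also have "2 * pi * of_int n * \<theta> + a + real j * (2 * pi * of_int n / real q)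
        = 2 * pi * of_int n * (\<theta> + real j / real q) + a"
      by (simp add: field_simps)
    finally show ?thesis by (simp add: tt_def)
  qed
  have w1: "w \<noteq> 1"
  proof
    assume "w = 1"
    then have "cos (2 * pi * of_int n / real q) = 1" unfolding w_def
      by (metis cis.sel(1) one_complex.sel(1))
    then obtain k :: int where k: "2 * pi * of_int n / real q = real_of_int k * 2 * pi"
      using cos_one_2pi_int by blast
    then have "of_int n = real_of_int k * real q" using q by (simp add: field_simps)
    then have "n = k * int q" by (metis of_int_eq_iff of_int_mult of_int_of_nat_eq)
    with nq False show False
      by (metis abs_mult dual_order.strict_trans2 mult_le_cancel_right1 mult_zero_left abs_ge_zero
          less_int_code(1) nat_int_comparison(2) of_nat_0_less_iff q zero_less_abs_iff abs_of_nat
          int_one_le_iff_zero_less linorder_not_less)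
  qed
  have wq: "w ^ q = 1" unfolding w_def Complex.DeMoivre using q by simp
  have "(\<Sum>j<q. w ^ j) = 0" using sum_gp_strict[of w q] w1 wq by simp
  then have "(\<Sum>j<q. z * w ^ j) = 0" by (simp add: sum_distrib_left[symmetric])
  then have "Re (\<Sum>j<q. z * w ^ j) = 0" by simp
  then have "(\<Sum>j<q. tt n a (\<theta> + real j / real q)) = 0"
    unfolding e Re_sum by simp
  then show ?thesis using False by simp
qed

lemma tt_integral:
  "(tt n a has_integral (if n = 0 then cos a else 0)) {0..1}"
proof (cases "n = 0")
  case True
  then show ?thesis unfolding tt_def using has_integral_const_real[of "cos a" 0 1] by simp
next
  case False
  define F where "F x = sin (2 * pi * of_int n * x + a) / (2 * pi * of_int n)" for x
  have d: "(F has_vector_derivative tt n a x) (at x within {0..1})" for x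
    unfolding F_def tt_def has_real_derivative_iff_has_vector_derivative[symmetric]
    using False by (auto intro!: derivative_eq_intros)
  have "(tt n a has_integral (F 1 - F 0)) {0..1}"
    by (rule fundamental_theorem_of_calculus) (auto intro: d)
  moreover have "F 1 = F 0" unfolding F_def
    using cos_shift_int sin_add by (simp add: sin_add)
  ultimately show ?thesis using False by simp
qed


lemma quad:
  fixes c a :: "'i \<Rightarrow> real" and n :: "'i \<Rightarrow> int"
  assumes q: "q > 0" and S: "finite S" and nq: "\<forall>i\<in>S. \<bar>n i\<bar> < int q"
  defines "g \<equiv> (\<lambda>x. \<Sum>i\<in>S. c i * tt (n i) (a i) x)"
  defines "I \<equiv> (\<Sum>i\<in>S. c i * (if n i = 0 then cos (a i) else 0))"
  shows "(g has_integral I) {0..1}"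
    and "(\<Sum>j<q. g (\<theta> + real j / real q)) = real q * I"
proof -
  show "(g has_integral I) {0..1}" unfolding g_def I_def
    by (intro has_integral_sum S has_integral_mult_right tt_integral)
  have "(\<Sum>j<q. g (\<theta> + real j / real q)) = (\<Sum>i\<in>S. c i * (\<Sum>j<q. tt (n i) (a i) (\<theta> + real j / real q)))"
    unfolding g_def by (simp add: sum_distrib_left) (rule sum.swap)
  also have "\<dots> = (\<Sum>i\<in>S. c i * (if n i = 0 then real q * cos (a i) else 0))"
    using tt_sum[OF q] nq by (intro sum.cong) auto
  also have "\<dots> = real q * I" unfolding I_def sum_distrib_left by (intro sum.cong) auto
  finally show "(\<Sum>j<q. g (\<theta> + real j / real q)) = real q * I" .
qed

lemma square_rep:
  fixes c :: "'i \<Rightarrow> real"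
  shows "(\<Sum>i\<in>S. c i * tt (n i) (a i) x)\<^sup>2 =
     (\<Sum>ij\<in>S\<times>S. (c (fst ij) * c (snd ij) / 2) * tt (n (fst ij) - n (snd ij)) (a (fst ij) - a (snd ij)) x)
   + (\<Sum>ij\<in>S\<times>S. (c (fst ij) * c (snd ij) / 2) * tt (n (fst ij) + n (snd ij)) (a (fst ij) + a (snd ij)) x)"
proof -
  have "(\<Sum>i\<in>S. c i * tt (n i) (a i) x)\<^sup>2 =
     (\<Sum>ij\<in>S\<times>S. (c (fst ij) * tt (n (fst ij)) (a (fst ij)) x) * (c (snd ij) * tt (n (snd ij)) (a (snd ij)) x))"
    unfolding power2_eq_square sum_product sum.cartesian_product by (intro sum.cong) auto
  also have "\<dots> = (\<Sum>ij\<in>S\<times>S. (c (fst ij) * c (snd ij) / 2) * tt (n (fst ij) - n (snd ij)) (a (fst ij) - a (snd ij)) x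
      + (c (fst ij) * c (snd ij) / 2) * tt (n (fst ij) + n (snd ij)) (a (fst ij) + a (snd ij)) x)"
  proof (rule sum.cong[OF refl])
    fix ij assume "ij \<in> S \<times> S"
    obtain i j where ij: "ij = (i, j)" by force
    have h: "tt (n i) (a i) x * tt (n j) (a j) x = (tt (n i - n j) (a i - a j) x + tt (n i + n j) (a i + a j) x) / 2"
    proof -
      have e1: "2 * pi * real_of_int (n i) * x + a i - (2 * pi * real_of_int (n j) * x + a j) = 2 * pi * real_of_int (n i - n j) * x + (a i - a j)"
        by (simp add: algebra_simps)
      have e2: "2 * pi * real_of_int (n i) * x + a i + (2 * pi * real_of_int (n j) * x + a j) = 2 * pi * real_of_int (n i + n j) * x + (a i + a j)"
        by (simp add: algebra_simps)
      show ?thesis unfolding tt_def cos_times_cos e1 e2 ..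
    qed
    show "(c (fst ij) * tt (n (fst ij)) (a (fst ij)) x) * (c (snd ij) * tt (n (snd ij)) (a (snd ij)) x) =
       (c (fst ij) * c (snd ij) / 2) * tt (n (fst ij) - n (snd ij)) (a (fst ij) - a (snd ij)) x
      + (c (fst ij) * c (snd ij) / 2) * tt (n (fst ij) + n (snd ij)) (a (fst ij) + a (snd ij)) x"
    proof -
      have "c i * tt (n i) (a i) x * (c j * tt (n j) (a j) x) = (c i * c j) * (tt (n i) (a i) x * tt (n j) (a j) x)"
        by (simp add: mult_ac)
      also have "\<dots> = (c i * c j) * ((tt (n i - n j) (a i - a j) x + tt (n i + n j) (a i + a j) x) / 2)"
        by (simp only: h)
      also have "\<dots> = (c i * c j / 2) * tt (n i - n j) (a i - a j) x + (c i * c j / 2) * tt (n i + n j) (a i + a j) x"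
        by (simp add: field_simps)
      finally show ?thesis unfolding ij by simp
    qed
  qed
  finally show ?thesis by (simp only: sum.distrib)
qed


lemma perm_sum:
  fixes g :: "real \<Rightarrow> real" and p :: int
  assumes per: "\<And>x m. g (x + of_int m) = g x" and q: "q > 0" and cop: "coprime p (int q)"
  shows "(\<Sum>k<q. g (\<theta> + real k * (of_int p / real q))) = (\<Sum>j<q. g (\<theta> + real j / real q))"
proof -
  define h where "h k = nat ((int k * p) mod int q)" for k
  have hlt: "h k < q" for k unfolding h_def using q by (simp add: nat_less_iff)
  have inj: "inj_on h {..<q}"
  proof
    fix k1 k2 assume k1: "k1 \<in> {..<q}" and k2: "k2 \<in> {..<q}" and e: "h k1 = h k2"
    have "(int k1 * p) mod int q = (int k2 * p) mod int q"
      using e q unfolding h_def by (simp add: nat_eq_iff2)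
    then have "int q dvd (int k1 - int k2) * p"
      by (metis left_diff_distrib mod_eq_dvd_iff)
    then have "int q dvd (int k1 - int k2)"
      using coprime_dvd_mult_left_iff[of "int q" p "int k1 - int k2"] cop by (simp add: coprime_commute)
    then obtain t where t: "int k1 - int k2 = int q * t" by (auto elim: dvdE)
    have "\<bar>int q * t\<bar> < int q" using k1 k2 t by auto
    then have "int q * \<bar>t\<bar> < int q * 1" by (simp add: abs_mult)
    then have "\<bar>t\<bar> < 1" using q by (simp only: mult_less_cancel_left)
    then have "t = 0" by simp
    then show "k1 = k2" using t by simp
  qed
  have img: "h ` {..<q} = {..<q}"
    by (rule endo_inj_surj) (use hlt inj in auto)
  have bij: "bij_betw h {..<q} {..<q}" using inj img by (simp add: bij_betw_def)
  have pt: "g (\<theta> + real k * (of_int p / real q)) = g (\<theta> + real (h k) / real q)" for k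
  proof -
    have d: "int k * p = int q * ((int k * p) div int q) + (int k * p) mod int q" by simp
    have "real (h k) = real_of_int ((int k * p) mod int q)"
      unfolding h_def using q by simp
    then have "real k * (of_int p / real q) = real (h k) / real q + of_int ((int k * p) div int q)"
    proof -
      assume hk: "real (h k) = real_of_int ((int k * p) mod int q)"
      have "real_of_int (int k * p) = real q * real_of_int ((int k * p) div int q) + real_of_int ((int k * p) mod int q)"
        using arg_cong[where f=real_of_int, OF d] by (simp only: of_int_add of_int_mult of_int_of_nat_eq)
      then show ?thesis using q hk by (simp add: field_simps)
    qed
    then have "\<theta> + real k * (of_int p / real q) = (\<theta> + real (h k) / real q) + of_int ((int k * p) div int q)"
      by simp
    then show ?thesis using per[of "\<theta> + real (h k) / real q"] by (simp only:)
  qed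
  have "(\<Sum>k<q. g (\<theta> + real k * (of_int p / real q))) = (\<Sum>k<q. (\<lambda>j. g (\<theta> + real j / real q)) (h k))"
    using pt by simp
  also have "\<dots> = (\<Sum>j<q. g (\<theta> + real j / real q))"
    by (rule sum.reindex_bij_betw[OF bij])
  finally show ?thesis .
qed

lemma shift_sum:
  fixes g :: "real \<Rightarrow> real"
  assumes per: "\<And>x m. g (x + of_int m) = g x" and q: "q > 0"
  shows "(\<Sum>k=1..q. g (\<theta> + real k / real q)) = (\<Sum>j<q. g (\<theta> + real j / real q))"
proof -
  define G where "G j = g (\<theta> + real j / real q)" for j
  have "G q = G 0" unfolding G_def using q per[of \<theta> 1] by simp
  have "(\<Sum>k=1..q. G k) = (\<Sum>k<q. G (Suc k))"
    using sum.atLeast1_atMost_eq[of G q] by simp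
  also have "\<dots> = (\<Sum>k<Suc q. G k) - G 0" by (simp only: sum.lessThan_Suc_shift)
  also have "\<dots> = (\<Sum>k<q. G k)" using \<open>G q = G 0\<close> by simp
  finally show ?thesis unfolding G_def .
qed


theorem lemma2:
  fixes v1 vm1 :: "real \<Rightarrow> real \<Rightarrow> real" and d :: nat and \<epsilon> b :: real
    and p :: int and q :: nat
  assumes eps: "\<epsilon> > 0" and bpos: "b > 0" and dpos: "d > 0"
    and H2: "\<forall>r. integral {0..1} (\<lambda>\<theta>. (vfun v1 vm1 \<theta> r)\<^sup>2) \<noteq> 0"
    and H3: "\<forall>r. trig_poly_deg d (\<lambda>\<theta>. v1 \<theta> r) \<and> trig_poly_deg d (\<lambda>\<theta>. vm1 \<theta> r)"
    and H4: "\<forall>p' :: int. \<forall>q' :: nat. coprime p' (int q') \<and> 1 \<le> q' \<and> q' \<le> 2 * d \<longrightarrow>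
               (\<forall>\<theta>. (\<Sum>k=1..q'. (vm1 (\<theta> + real k / real q') (real_of_int p' / real q')
                                    - v1 (\<theta> + real k / real q') (real_of_int p' / real q'))\<^sup>2) \<noteq> 0)"
    and cop: "coprime p (int q)"
    and imag: "d < q" "real q < \<epsilon> powr (- b)"
  shows "\<forall>\<theta>. sigma2 (vfun v1 vm1) \<theta> p q \<noteq> 0"
proof
  fix \<theta> :: real
  have q: "q > 0" using imag dpos by simp
  define r where "r = real_of_int p / real q"
  define f where "f x = vfun v1 vm1 x r" for x
  obtain a1 b1 where v1r: "\<And>x. v1 x r = (\<Sum>k\<le>d. a1 k * cos (2 * pi * real k * x) + b1 k * sin (2 * pi * real k * x))"
    using H3 unfolding trig_poly_deg_def by blast
  obtain a2 b2 where vm1r: "\<And>x. vm1 x r = (\<Sum>k\<le>d. a2 k * cos (2 * pi * real k * x) + b2 k * sin (2 * pi * real k * x))"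
    using H3 unfolding trig_poly_deg_def by blast
  define S where "S = {..d} \<times> (UNIV :: bool set)"
  define c where "c i = (if snd i then (a1 (fst i) - a2 (fst i)) / 2 else (b1 (fst i) - b2 (fst i)) / 2)" for i :: "nat \<times> bool"
  define n where "n i = int (fst i)" for i :: "nat \<times> bool"
  define al where "al i = (if snd i then 0 else - (pi / 2))" for i :: "nat \<times> bool"
  have finS: "finite S" unfolding S_def by simp
  have hf: "f x = (\<Sum>i\<in>S. c i * tt (n i) (al i) x)" for x
  proof -
    have "f x = (\<Sum>k\<le>d. (a1 k - a2 k) / 2 * cos (2 * pi * real k * x) + (b1 k - b2 k) / 2 * sin (2 * pi * real k * x))"
      unfolding f_def vfun_def v1r vm1r sum_subtractf[symmetric] sum_divide_distrib
      by (intro sum.cong refl) (simp add: field_simps)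
    also have "\<dots> = (\<Sum>k\<le>d. \<Sum>b\<in>UNIV. c (k, b) * tt (n (k, b)) (al (k, b)) x)"
    proof (intro sum.cong refl)
      fix k
      have "cos (2 * pi * real k * x + - (pi / 2)) = sin (2 * pi * real k * x)"
        by (simp only: cos_add cos_minus sin_minus cos_pi_half sin_pi_half)
      then show "(a1 k - a2 k) / 2 * cos (2 * pi * real k * x) + (b1 k - b2 k) / 2 * sin (2 * pi * real k * x) =
          (\<Sum>b\<in>UNIV. c (k, b) * tt (n (k, b)) (al (k, b)) x)"
        by (simp add: UNIV_bool c_def n_def al_def tt_def)
    qed
    also have "\<dots> = (\<Sum>i\<in>S. c i * tt (n i) (al i) x)"
      unfolding S_def sum.cartesian_product by (intro sum.cong) auto
    finally show ?thesis .
  qed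
  have per: "f (x + of_int m) = f x" for x m unfolding hf by (simp add: tt_periodic)
  have nS: "\<forall>i\<in>S. \<bar>n i\<bar> \<le> int d" unfolding S_def n_def by auto
  have f2per: "(f (x + of_int m))\<^sup>2 = (f x)\<^sup>2" for x m using per by simp
  have P: "(\<Sum>k<q. (f (\<theta> + real k * r))\<^sup>2) = (\<Sum>j<q. (f (\<theta> + real j / real q))\<^sup>2)"
    unfolding r_def by (rule perm_sum[where g="\<lambda>x. (f x)\<^sup>2", OF f2per q cop])
  have key: "(\<Sum>j<q. (f (\<theta> + real j / real q))\<^sup>2) \<noteq> 0"
  proof (cases "q \<le> 2 * d")
    case True
    have "(\<Sum>k=1..q. (vm1 (\<theta> + real k / real q) r - v1 (\<theta> + real k / real q) r)\<^sup>2) \<noteq> 0"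
      using H4 cop q True unfolding r_def by auto
    moreover have "(vm1 x r - v1 x r)\<^sup>2 = 4 * (f x)\<^sup>2" for x
      unfolding f_def vfun_def by (simp add: power2_eq_square algebra_simps)
    ultimately have "4 * (\<Sum>k=1..q. (f (\<theta> + real k / real q))\<^sup>2) \<noteq> 0"
      by (simp add: sum_distrib_left)
    then have "(\<Sum>k=1..q. (f (\<theta> + real k / real q))\<^sup>2) \<noteq> 0" by simp
    then show ?thesis
      using shift_sum[where g="\<lambda>x. (f x)\<^sup>2", OF f2per q] by simp
  next
    case False
    define c2 where "c2 ij = c (fst ij) * c (snd ij) / 2" for ij
    define F1 where "F1 x = (\<Sum>ij\<in>S\<times>S. c2 ij * tt (n (fst ij) - n (snd ij)) (al (fst ij) - al (snd ij)) x)" for x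
    define F2 where "F2 x = (\<Sum>ij\<in>S\<times>S. c2 ij * tt (n (fst ij) + n (snd ij)) (al (fst ij) + al (snd ij)) x)" for x
    have sq: "(f x)\<^sup>2 = F1 x + F2 x" for x
      unfolding hf F1_def F2_def c2_def by (rule square_rep)
    have fin2: "finite (S \<times> S)" using finS by simp
    have b1: "\<forall>ij\<in>S\<times>S. \<bar>n (fst ij) - n (snd ij)\<bar> < int q"
    proof
      fix ij assume "ij \<in> S \<times> S"
      then have "\<bar>n (fst ij)\<bar> \<le> int d" "\<bar>n (snd ij)\<bar> \<le> int d" using nS by auto
      then show "\<bar>n (fst ij) - n (snd ij)\<bar> < int q" using False by arith
    qed
    have b2: "\<forall>ij\<in>S\<times>S. \<bar>n (fst ij) + n (snd ij)\<bar> < int q"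
    proof
      fix ij assume "ij \<in> S \<times> S"
      then have "\<bar>n (fst ij)\<bar> \<le> int d" "\<bar>n (snd ij)\<bar> \<le> int d" using nS by auto
      then show "\<bar>n (fst ij) + n (snd ij)\<bar> < int q" using False by arith
    qed
    note Q1 = quad[OF q fin2 b1, of c2 "\<lambda>ij. al (fst ij) - al (snd ij)", folded F1_def]
    note Q2 = quad[OF q fin2 b2, of c2 "\<lambda>ij. al (fst ij) + al (snd ij)", folded F2_def]
    define I1 where "I1 = (\<Sum>i\<in>S \<times> S. c2 i * (if n (fst i) - n (snd i) = 0 then cos (al (fst i) - al (snd i)) else 0))"
    define I2 where "I2 = (\<Sum>i\<in>S \<times> S. c2 i * (if n (fst i) + n (snd i) = 0 then cos (al (fst i) + al (snd i)) else 0))"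
    have "((\<lambda>x. F1 x + F2 x) has_integral (I1 + I2)) {0..1}"
      using has_integral_add[OF Q1(1) Q2(1)] unfolding I1_def I2_def .
    then have "((\<lambda>x. (vfun v1 vm1 x r)\<^sup>2) has_integral (I1 + I2)) {0..1}"
      using sq unfolding f_def by simp
    then have "I1 + I2 \<noteq> 0" using H2 by (metis integral_unique)
    moreover have "(\<Sum>j<q. (f (\<theta> + real j / real q))\<^sup>2) = real q * (I1 + I2)"
      using Q1(2)[of \<theta>] Q2(2)[of \<theta>] unfolding sq sum.distrib I1_def I2_def by (simp add: algebra_simps)
    ultimately show ?thesis using q by simp
  qed
  show "sigma2 (vfun v1 vm1) \<theta> p q \<noteq> 0"
    using key P q unfolding sigma2_def f_def r_def by simp
qed

end
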